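(* $\mathcal{M}_1\subsetneq\mathcal{M}_0\subsetneq\mathcal{M}$.
   Context: For $z\in\mathbb{D}^*=\{0<|z|<1\}$ let $f(x)=zx$, $g(x)=z(x-1)+1$, and let $\Lambda_z$ be the unique nonempty compact subset of $\mathbb{C}$ with $\Lambda_z=f(\Lambda_z)\cup g(\Lambda_z)$. Define $\mathcal{M}=\{z\in\mathbb{D}^*:\Lambda_z\text{ connected}\}$, $\mathcal{M}_0=\{z\in\mathbb{D}^*:1/2\in\Lambda_z\}$, and $\mathcal{M}_1=\{z\in\mathbb{D}^*:\Lambda_z\text{ connected and full}\}$, where a set is full if its complement in $\mathbb{C}$ is connected. *)

theory Defs
  imports "HOL-Analysis.Analysis"
begin

definition ifs_f :: "complex \<Rightarrow> complex \<Rightarrow> complex" where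
  "ifs_f z x = z * x"

definition ifs_g :: "complex \<Rightarrow> complex \<Rightarrow> complex" where
  "ifs_g z x = z * (x - 1) + 1"

definition attractor :: "complex \<Rightarrow> complex set" where
  "attractor z = (THE S. S \<noteq> {} \<and> compact S \<and> S = ifs_f z ` S \<union> ifs_g z ` S)"

definition punctured_disc :: "complex set" where
  "punctured_disc = {z. 0 < norm z \<and> norm z < 1}"

definition full :: "complex set \<Rightarrow> bool" where
  "full S \<longleftrightarrow> connected (- S)"

definition Mset :: "complex set" where
  "Mset = {z \<in> punctured_disc. connected (attractor z)}"

definition M0set :: "complex set" where
  "M0set = {z \<in> punctured_disc. (1/2 :: complex) \<in> attractor z}"

definition M1set :: "complex set" where
  "M1set = {z \<in> punctured_disc. connected (attractor z) \<and> full (attractor z)}"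

end

theory Submission
  imports Defs
begin


definition sg :: "bool \<Rightarrow> complex" where "sg b = (if b then 1 else -1)"

lemma norm_sg[simp]: "norm (sg b) = 1" by (simp add: sg_def)

definition sv :: "complex \<Rightarrow> (nat \<Rightarrow> bool) \<Rightarrow> complex" where
  "sv z c = (\<Sum>n. sg (c n) * z^n)"

definition SS :: "complex \<Rightarrow> complex set" where "SS z = range (sv z)"

definition phi :: "complex \<Rightarrow> bool \<Rightarrow> complex \<Rightarrow> complex" where
  "phi z b x = sg b + z * x"

lemma summable_sv: assumes "norm z < 1" shows "summable (\<lambda>n. sg (c n) * z^n)"
proof (rule summable_comparison_test[of _ "\<lambda>n. norm z ^ n"])
  show "\<exists>N. \<forall>n\<ge>N. norm (sg (c n) * z ^ n) \<le> norm z ^ n"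
    by (simp add: norm_mult norm_power)
  show "summable (\<lambda>n. norm z ^ n)" using assms by (simp add: summable_geometric)
qed

lemma sv_bound: assumes "norm z < 1" shows "norm (sv z c) \<le> 1 / (1 - norm z)"
proof -
  have s: "summable (\<lambda>n. norm z ^ n)" using assms by (simp add: summable_geometric)
  have "norm (sv z c) \<le> (\<Sum>n. norm (sg (c n) * z^n))"
    unfolding sv_def
    by (rule summable_norm) (rule summable_comparison_test[OF _ s], simp add: norm_mult norm_power)
  also have "\<dots> = (\<Sum>n. norm z ^ n)" by (simp add: norm_mult norm_power)
  also have "\<dots> = 1 / (1 - norm z)" using assms by (simp add: suminf_geometric)
  finally show ?thesis .
qed

lemma sv_shift: assumes "norm z < 1" shows "sv z c = sg (c 0) + z * sv z (c \<circ> Suc)"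
proof -
  have s: "summable (\<lambda>n. sg (c n) * z^n)" using summable_sv[OF assms] .
  have s2: "summable (\<lambda>n. sg ((c \<circ> Suc) n) * z^n)" using summable_sv[OF assms] .
  have "sv z c = sg (c 0) * z^0 + (\<Sum>n. sg (c (Suc n)) * z^(Suc n))"
    unfolding sv_def using suminf_split_head[OF s] by simp
  also have "(\<Sum>n. sg (c (Suc n)) * z^(Suc n)) = (\<Sum>n. z * (sg ((c \<circ> Suc) n) * z^n))"
    by (simp add: algebra_simps)
  also have "\<dots> = z * sv z (c \<circ> Suc)" unfolding sv_def using suminf_mult[OF s2] by simp
  finally show ?thesis by simp
qed

lemma sv_prefix: assumes "norm z < 1"
  shows "sv z c = (\<Sum>j<n. sg (c j) * z^j) + z^n * sv z (\<lambda>k. c (k + n))"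
proof (induction n arbitrary: c)
  case 0 then show ?case by simp
next
  case (Suc n)
  have "sv z c = sg (c 0) + z * sv z (c \<circ> Suc)" by (rule sv_shift[OF assms])
  also have "sv z (c \<circ> Suc) = (\<Sum>j<n. sg (c (Suc j)) * z^j) + z^n * sv z (\<lambda>k. c (Suc (k + n)))"
    using Suc[of "c \<circ> Suc"] by (simp add: comp_def)
  finally have "sv z c = sg (c 0) + z * ((\<Sum>j<n. sg (c (Suc j)) * z^j) + z^n * sv z (\<lambda>k. c (k + Suc n)))"
    by simp
  also have "\<dots> = (\<Sum>j<Suc n. sg (c j) * z^j) + z^Suc n * sv z (\<lambda>k. c (k + Suc n))"
    by (simp only: sum.lessThan_Suc_shift) (simp add: sum_distrib_left algebra_simps)
  finally show ?case .
qed

lemma sv_neg: assumes "norm z < 1" shows "sv z (\<lambda>n. \<not> c n) = - sv z c"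
proof -
  have "(\<lambda>n. sg (\<not> c n) * z^n) = (\<lambda>n. - (sg (c n) * z^n))" by (auto simp: sg_def)
  then show ?thesis unfolding sv_def using suminf_minus[OF summable_sv[OF assms, of c]] by simp
qed

lemma sv_cons: assumes "norm z < 1" shows "sv z (case_nat b c) = sg b + z * sv z c"
proof -
  have "case_nat b c \<circ> Suc = c" by auto
  then show ?thesis using sv_shift[OF assms, of "case_nat b c"] by simp
qed

lemma SS_eq: assumes "norm z < 1" shows "SS z = phi z True ` SS z \<union> phi z False ` SS z"
proof
  show "SS z \<subseteq> phi z True ` SS z \<union> phi z False ` SS z"
  proof
    fix x assume "x \<in> SS z"
    then obtain c where x: "x = sv z c" by (auto simp: SS_def)
    have "x = phi z (c 0) (sv z (c \<circ> Suc))" using sv_shift[OF assms, of c] x by (simp add: phi_def)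
    then show "x \<in> phi z True ` SS z \<union> phi z False ` SS z"
      by (cases "c 0") (auto simp: SS_def)
  qed
  show "phi z True ` SS z \<union> phi z False ` SS z \<subseteq> SS z"
  proof -
    have "phi z b (sv z c) \<in> SS z" for b c
    proof -
      have "phi z b (sv z c) = sv z (case_nat b c)" using sv_cons[OF assms, of b c] by (simp add: phi_def)
      then show ?thesis unfolding SS_def by (simp only: rangeI)
    qed
    then show ?thesis by (auto simp: SS_def)
  qed
qed

lemma SS_bound: assumes "norm z < 1" "x \<in> SS z" shows "norm x \<le> 1 / (1 - norm z)"
  using assms sv_bound by (auto simp: SS_def)

lemma bounded_SS: assumes "norm z < 1" shows "bounded (SS z)"
  using SS_bound[OF assms] by (auto simp: bounded_iff)

lemma SS_ne: "SS z \<noteq> {}" by (simp add: SS_def)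

lemma SS_neg: assumes "norm z < 1" "x \<in> SS z" shows "- x \<in> SS z"
  using assms sv_neg[OF assms(1)] by (auto simp: SS_def) (metis rangeI)

lemma trap_sub_SS:
  assumes z: "norm z < 1" and bT: "bounded T"
    and cov: "T \<subseteq> phi z True ` T \<union> phi z False ` T" and x: "x \<in> T"
  shows "x \<in> SS z"
proof -
  have ex: "\<exists>p. snd p \<in> T \<and> y = phi z (fst p) (snd p)" if "y \<in> T" for y
  proof -
    from cov that obtain b y' where "y' \<in> T" "y = phi z b y'" by blast
    then show ?thesis by (intro exI[of _ "(b,y')"]) simp
  qed
  define nxt where "nxt y = (SOME p. snd p \<in> T \<and> y = phi z (fst p) (snd p))" for y
  have nxt: "snd (nxt y) \<in> T \<and> y = phi z (fst (nxt y)) (snd (nxt y))" if "y \<in> T" for y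
    unfolding nxt_def using someI_ex[OF ex[OF that]] .
  define xs where "xs = rec_nat x (\<lambda>_ y. snd (nxt y))"
  have xs0: "xs 0 = x" and xsS: "xs (Suc k) = snd (nxt (xs k))" for k by (simp_all add: xs_def)
  define c where "c k = fst (nxt (xs k))" for k
  have inT: "xs k \<in> T" for k
    by (induction k) (use x nxt in \<open>auto simp: xs0 xsS\<close>)
  have step: "xs k = phi z (c k) (xs (Suc k))" for k
    using nxt[OF inT[of k]] by (simp add: c_def xsS)
  have part: "x = (\<Sum>j<N. sg (c j) * z^j) + z^N * xs N" for N
  proof (induction N)
    case 0 then show ?case by (simp add: xs0)
  next
    case (Suc N)
    have "xs N = sg (c N) + z * xs (Suc N)" using step[of N] by (simp add: phi_def)
    with Suc show ?case by (simp add: algebra_simps)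
  qed
  obtain B where B: "\<And>y. y \<in> T \<Longrightarrow> norm y \<le> B" using bT by (auto simp: bounded_iff)
  have "(\<lambda>N. z^N * xs N) \<longlonglongrightarrow> 0"
  proof (rule Lim_null_comparison[of _ "\<lambda>N. norm z ^ N * B"])
    show "\<forall>\<^sub>F N in sequentially. norm (z ^ N * xs N) \<le> norm z ^ N * B"
      using B[OF inT] by (intro always_eventually allI) (simp add: norm_mult norm_power mult_left_mono)
    show "(\<lambda>N. norm z ^ N * B) \<longlonglongrightarrow> 0"
      using z by (auto intro!: tendsto_mult_left_zero LIMSEQ_power_zero)
  qed
  from tendsto_diff[OF tendsto_const this] have lim1: "(\<lambda>N. x - z^N * xs N) \<longlonglongrightarrow> x - 0" .
  have eqf: "(\<lambda>N. (\<Sum>j<N. sg (c j) * z^j)) = (\<lambda>N. x - z^N * xs N)"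
  proof (rule ext)
    fix N show "(\<Sum>j<N. sg (c j) * z^j) = x - z^N * xs N" using part[of N] by (simp add: eq_diff_eq)
  qed
  have lim2: "(\<lambda>N. (\<Sum>j<N. sg (c j) * z^j)) \<longlonglongrightarrow> x"
    unfolding eqf using lim1 by (simp only: diff_zero)
  have lim3: "(\<lambda>N. (\<Sum>j<N. sg (c j) * z^j)) \<longlonglongrightarrow> sv z c"
    unfolding sv_def using summable_LIMSEQ[OF summable_sv[OF z]] .
  have "x = sv z c" using LIMSEQ_unique[OF lim2 lim3] .
  then show ?thesis unfolding SS_def by (simp only: rangeI)
qed

lemma SS_sub_closed:
  assumes z: "norm z < 1" and cT: "closed T" and t: "t \<in> T"
    and inv: "\<And>b y. y \<in> T \<Longrightarrow> phi z b y \<in> T"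
  shows "SS z \<subseteq> T"
proof
  fix x assume "x \<in> SS z"
  then obtain c where x: "x = sv z c" by (auto simp: SS_def)
  have mem: "(\<Sum>j<N. sg (c j) * z^j) + z^N * t \<in> T" for N
  proof (induction N arbitrary: c)
    case 0 then show ?case using t by simp
  next
    case (Suc N)
    have "(\<Sum>j<Suc N. sg (c j) * z^j) + z^Suc N * t
        = phi z (c 0) ((\<Sum>j<N. sg ((c \<circ> Suc) j) * z^j) + z^N * t)"
      by (simp only: sum.lessThan_Suc_shift) (simp add: phi_def sum_distrib_left algebra_simps)
    then show ?case using inv Suc[of "c \<circ> Suc"] by simp
  qed
  have "(\<lambda>N. z^N * t) \<longlonglongrightarrow> 0"
    using z by (auto intro!: tendsto_mult_left_zero LIMSEQ_power_zero)
  moreover have "(\<lambda>N. (\<Sum>j<N. sg (c j) * z^j)) \<longlonglongrightarrow> sv z c"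
    unfolding sv_def using summable_LIMSEQ[OF summable_sv[OF z]] .
  ultimately have "(\<lambda>N. (\<Sum>j<N. sg (c j) * z^j) + z^N * t) \<longlonglongrightarrow> sv z c + 0"
    by (intro tendsto_add)
  then have "(\<lambda>N. (\<Sum>j<N. sg (c j) * z^j) + z^N * t) \<longlonglongrightarrow> sv z c" by simp
  from closed_sequentially[OF cT _ this] mem show "x \<in> T" using x by blast
qed



lemma continuous_on_phi[continuous_intros]: "continuous_on X (phi z b)"
  unfolding phi_def by (intro continuous_intros)

lemma closed_SS: assumes z: "norm z < 1" shows "closed (SS z)"
proof -
  let ?C = "closure (SS z)"
  have cC: "compact ?C" using bounded_SS[OF z] by (simp add: compact_closure)
  have cD: "closed (phi z True ` ?C \<union> phi z False ` ?C)"
    by (intro closed_Un compact_imp_closed compact_continuous_image cC continuous_intros)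
  have "SS z \<subseteq> phi z True ` ?C \<union> phi z False ` ?C"
    using SS_eq[OF z] closure_subset[of "SS z"] by blast
  then have sub: "?C \<subseteq> phi z True ` ?C \<union> phi z False ` ?C"
    by (rule closure_minimal[OF _ cD])
  have "?C \<subseteq> SS z"
    using trap_sub_SS[OF z _ sub] cC compact_imp_bounded by blast
  then show ?thesis using closure_subset_eq by blast
qed

lemma compact_SS: assumes "norm z < 1" shows "compact (SS z)"
  using closed_SS[OF assms] bounded_SS[OF assms] by (simp add: compact_eq_bounded_closed)

definition aff :: "complex \<Rightarrow> complex \<Rightarrow> complex" where "aff z s = 1/2 + (1 - z)/2 * s"
definition ainv :: "complex \<Rightarrow> complex \<Rightarrow> complex" where "ainv z x = (x - 1/2) * (2 / (1 - z))"

lemma aff_ainv: "z \<noteq> 1 \<Longrightarrow> aff z (ainv z x) = x"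
  by (simp add: aff_def ainv_def field_simps)
lemma ainv_aff: "z \<noteq> 1 \<Longrightarrow> ainv z (aff z x) = x"
  by (simp add: aff_def ainv_def field_simps)

lemma continuous_on_aff[continuous_intros]: "continuous_on X (aff z)"
  unfolding aff_def by (intro continuous_intros)
lemma continuous_on_ainv[continuous_intros]: "continuous_on X (ainv z)"
  unfolding ainv_def by (intro continuous_intros)

lemma f_aff: "ifs_f z (aff z s) = aff z (phi z False s)"
  by (simp add: ifs_f_def aff_def phi_def sg_def field_simps)
lemma g_aff: "ifs_g z (aff z s) = aff z (phi z True s)"
  by (simp add: ifs_g_def aff_def phi_def sg_def field_simps)

lemma aff_inj: "z \<noteq> 1 \<Longrightarrow> inj (aff z)"
  by (metis ainv_aff injI)

lemma aff_bij: "z \<noteq> 1 \<Longrightarrow> bij (aff z)"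
  by (rule o_bij[of "ainv z"]) (auto simp: fun_eq_iff aff_ainv ainv_aff)

lemma img_ainv_aff: "z \<noteq> 1 \<Longrightarrow> ainv z ` aff z ` X = X"
  by (simp add: image_image ainv_aff)
lemma img_aff_ainv: "z \<noteq> 1 \<Longrightarrow> aff z ` ainv z ` X = X"
  by (simp add: image_image aff_ainv)

lemma pd_norm: "z \<in> punctured_disc \<Longrightarrow> norm z < 1" by (simp add: punctured_disc_def)
lemma pd_ne1: "z \<in> punctured_disc \<Longrightarrow> z \<noteq> 1" by (auto simp: punctured_disc_def)

lemma attractor_eq: assumes zD: "z \<in> punctured_disc" shows "attractor z = aff z ` SS z"
proof -
  have z: "norm z < 1" and z1: "z \<noteq> 1" using zD by (auto simp: punctured_disc_def)
  have fimg: "ifs_f z ` aff z ` X = aff z ` phi z False ` X" for X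
    by (simp add: image_image f_aff)
  have gimg: "ifs_g z ` aff z ` X = aff z ` phi z True ` X" for X
    by (simp add: image_image g_aff)
  show ?thesis unfolding attractor_def
  proof (rule the_equality)
    show "aff z ` SS z \<noteq> {} \<and> compact (aff z ` SS z) \<and>
          aff z ` SS z = ifs_f z ` aff z ` SS z \<union> ifs_g z ` aff z ` SS z"
    proof (intro conjI)
      show "aff z ` SS z \<noteq> {}" using SS_ne by simp
      show "compact (aff z ` SS z)"
        by (intro compact_continuous_image compact_SS z continuous_intros)
      show "aff z ` SS z = ifs_f z ` aff z ` SS z \<union> ifs_g z ` aff z ` SS z"
      proof -
        have e: "SS z = phi z False ` SS z \<union> phi z True ` SS z" using SS_eq[OF z] by (simp only: Un_commute)
        show ?thesis unfolding fimg gimg image_Un[symmetric] by (rule arg_cong[OF e])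
      qed
    qed
  next
    fix T assume T: "T \<noteq> {} \<and> compact T \<and> T = ifs_f z ` T \<union> ifs_g z ` T"
    define T' where "T' = ainv z ` T"
    have TT': "T = aff z ` T'" unfolding T'_def using img_aff_ainv[OF z1] by simp
    have cT': "compact T'" unfolding T'_def using T by (intro compact_continuous_image continuous_intros) auto
    have neT': "T' \<noteq> {}" using T by (simp add: T'_def)
    from T have "T = ifs_f z ` T \<union> ifs_g z ` T" by (rule conjunct2[OF conjunct2])
    then have "aff z ` T' = ifs_f z ` aff z ` T' \<union> ifs_g z ` aff z ` T'" unfolding TT' .
    then have "aff z ` T' = aff z ` (phi z True ` T' \<union> phi z False ` T')"
      unfolding fimg gimg image_Un by (simp only: Un_commute)
    then have eqT': "T' = phi z True ` T' \<union> phi z False ` T'"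
      using aff_inj[OF z1] by (simp add: inj_image_eq_iff)
    have "T' \<subseteq> SS z"
    proof
      fix x assume "x \<in> T'"
      show "x \<in> SS z"
        using trap_sub_SS[OF z compact_imp_bounded[OF cT'] equalityD1[OF eqT'] \<open>x \<in> T'\<close>] .
    qed
    moreover have "SS z \<subseteq> T'"
    proof -
      obtain t where "t \<in> T'" using neT' by blast
      moreover have "phi z b y \<in> T'" if "y \<in> T'" for b y
      proof -
        have "phi z b y \<in> phi z True ` T' \<union> phi z False ` T'" using that by (cases b) auto
        then show ?thesis by (simp only: eqT'[symmetric])
      qed
      ultimately show ?thesis using SS_sub_closed[OF z compact_imp_closed[OF cT']] by blast
    qed
    ultimately show "T = aff z ` SS z" using TT' by simp
  qed
qed

lemma half_iff: assumes "z \<noteq> 1" shows "(1/2 \<in> aff z ` X) \<longleftrightarrow> (0 \<in> X)"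
proof
  assume "1/2 \<in> aff z ` X"
  then obtain s where s: "s \<in> X" "1/2 = aff z s" by blast
  then have "(1 - z)/2 * s = 0" by (simp add: aff_def)
  then have "s = 0" using assms by simp
  then show "0 \<in> X" using s by simp
next
  assume "0 \<in> X" then show "1/2 \<in> aff z ` X" by (force simp: aff_def)
qed

lemma conn_iff: assumes "z \<noteq> 1" shows "connected (aff z ` X) \<longleftrightarrow> connected X"
proof
  assume "connected (aff z ` X)"
  then have "connected (ainv z ` aff z ` X)"
    by (rule connected_continuous_image[OF continuous_on_ainv])
  then show "connected X" by (simp only: img_ainv_aff[OF assms])
next
  assume "connected X" then show "connected (aff z ` X)"
    by (intro connected_continuous_image continuous_intros)
qed

lemma full_iff: assumes "z \<noteq> 1" shows "full (aff z ` X) \<longleftrightarrow> full X"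
proof -
  have "- (aff z ` X) = aff z ` (- X)" using bij_image_Compl_eq[OF aff_bij[OF assms]] by simp
  then show ?thesis unfolding full_def using conn_iff[OF assms] by simp
qed

lemma Mset_iff: "z \<in> Mset \<longleftrightarrow> z \<in> punctured_disc \<and> connected (SS z)"
  unfolding Mset_def using attractor_eq conn_iff pd_ne1 by auto
lemma M0set_iff: "z \<in> M0set \<longleftrightarrow> z \<in> punctured_disc \<and> 0 \<in> SS z"
  unfolding M0set_def using attractor_eq half_iff pd_ne1 by auto
lemma M1set_iff: "z \<in> M1set \<longleftrightarrow> z \<in> punctured_disc \<and> connected (SS z) \<and> full (SS z)"
  unfolding M1set_def using attractor_eq conn_iff full_iff pd_ne1 by auto



lemma conn_SS: assumes z: "norm z < 1"
  and int: "phi z True ` SS z \<inter> phi z False ` SS z \<noteq> {}"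
  shows "connected (SS z)"
proof -
  define R where "R = 1 / (1 - norm z)"
  have Rpos: "R > 0" using z by (simp add: R_def)
  have R: "R = 1 + norm z * R" using z by (simp add: R_def field_simps)
  define F where "F X = phi z True ` X \<union> phi z False ` X" for X
  define K where "K n = (F ^^ n) (cball 0 R)" for n
  have K0: "K 0 = cball 0 R" and KS: "K (Suc n) = F (K n)" for n by (simp_all add: K_def)
  have SSeq: "SS z = F (SS z)" using SS_eq[OF z] by (simp add: F_def)
  have SSK: "SS z \<subseteq> K n" for n
  proof (induction n)
    case 0 then show ?case using SS_bound[OF z] by (auto simp: K0 R_def)
  next
    case (Suc n)
    have "F (SS z) \<subseteq> F (K n)" using Suc unfolding F_def by blast
    then show ?case using SSeq KS by simp
  qed
  have Kcc: "compact (K n) \<and> connected (K n)" for n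
  proof (induction n)
    case 0 then show ?case by (simp add: K0)
  next
    case (Suc n)
    have c1: "compact (phi z b ` K n)" for b using Suc by (intro compact_continuous_image continuous_intros) auto
    have c2: "connected (phi z b ` K n)" for b using Suc by (intro connected_continuous_image continuous_intros) auto
    have "phi z True ` SS z \<inter> phi z False ` SS z \<subseteq> phi z True ` K n \<inter> phi z False ` K n"
      using SSK[of n] by blast
    then have "phi z True ` K n \<inter> phi z False ` K n \<noteq> {}" using int by blast
    then show ?case unfolding KS F_def using c1 c2 by (simp add: compact_Un connected_Un)
  qed
  have Kdec: "K (Suc n) \<subseteq> K n" for n
  proof (induction n)
    case 0
    have "phi z b x \<in> cball 0 R" if "x \<in> cball 0 R" for b x
    proof -
      have "norm (phi z b x) \<le> norm (sg b) + norm (z * x)" unfolding phi_def by (rule norm_triangle_ineq)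
      also have "\<dots> \<le> 1 + norm z * R" using that by (simp add: norm_mult mult_left_mono)
      finally show ?thesis using R by simp
    qed
    then show ?case by (auto simp: KS K0 F_def)
  next
    case (Suc n) then show ?case unfolding KS F_def by blast
  qed
  have Kmono: "n \<le> m \<Longrightarrow> K m \<subseteq> K n" for m n
    by (rule lift_Suc_antimono_le[of K]) (use Kdec in auto)
  have Knear: "\<forall>y\<in>K n. \<exists>s\<in>SS z. dist y s \<le> norm z ^ n * (2 * R)" for n
  proof (induction n)
    case 0
    show ?case
    proof
      fix y assume y: "y \<in> K 0"
      have s: "sv z (\<lambda>_. True) \<in> SS z" by (simp add: SS_def)
      have "dist y (sv z (\<lambda>_. True)) \<le> norm y + norm (sv z (\<lambda>_. True))"
        by (simp add: dist_norm norm_triangle_ineq4)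
      also have "\<dots> \<le> R + R"
      proof (rule add_mono)
        show "norm y \<le> R" using y by (simp add: K0)
        show "norm (sv z (\<lambda>_. True)) \<le> R" using sv_bound[OF z] by (simp add: R_def)
      qed
      finally show "\<exists>s\<in>SS z. dist y s \<le> norm z ^ 0 * (2 * R)" using s by auto
    qed
  next
    case (Suc n)
    show ?case
    proof
      fix y assume "y \<in> K (Suc n)"
      then obtain b y' where y': "y' \<in> K n" "y = phi z b y'" by (auto simp: KS F_def)
      then obtain s' where s': "s' \<in> SS z" "dist y' s' \<le> norm z ^ n * (2 * R)" using Suc by blast
      have sin: "phi z b s' \<in> SS z" using s'(1) SSeq by (cases b) (auto simp: F_def)
      have "y - phi z b s' = z * (y' - s')" using y' by (simp add: phi_def algebra_simps)
      then have "dist y (phi z b s') = norm z * dist y' s'"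
        by (simp add: dist_norm norm_mult)
      also have "\<dots> \<le> norm z * (norm z ^ n * (2 * R))" using s'(2) by (simp add: mult_left_mono)
      finally show "\<exists>s\<in>SS z. dist y s \<le> norm z ^ Suc n * (2 * R)"
        using sin by (intro bexI[of _ "phi z b s'"]) (simp_all add: mult.assoc)
    qed
  qed
  have inter: "\<Inter>(range K) = SS z"
  proof
    show "SS z \<subseteq> \<Inter>(range K)" using SSK by blast
    show "\<Inter>(range K) \<subseteq> SS z"
    proof
      fix x assume x: "x \<in> \<Inter>(range K)"
      have "x \<in> closure (SS z)"
        unfolding closure_approachable
      proof (intro allI impI)
        fix e :: real assume e: "e > 0"
        obtain n where n: "norm z ^ n < e / (2 * R)"
          using real_arch_pow_inv[of "e / (2*R)" "norm z"] e Rpos z by auto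
        obtain s where s: "s \<in> SS z" "dist x s \<le> norm z ^ n * (2 * R)" using Knear[of n] x by blast
        have "norm z ^ n * (2 * R) < e" using n Rpos by (simp add: field_simps)
        then show "\<exists>y\<in>SS z. dist y x < e" using s dist_commute[of s x] by (intro bexI[of _ s]) auto
      qed
      then show "x \<in> SS z" using closed_SS[OF z] by (simp add: closure_closed)
    qed
  qed
  have "connected (\<Inter>(range K))"
  proof (rule connected_chain)
    show "\<And>S. S \<in> range K \<Longrightarrow> compact S \<and> connected S" using Kcc by auto
    show "\<And>S T. S \<in> range K \<and> T \<in> range K \<Longrightarrow> S \<subseteq> T \<or> T \<subseteq> S"
    proof -
      fix S T assume "S \<in> range K \<and> T \<in> range K"
      then obtain m n where mn: "S = K m" "T = K n" by blast
      show "S \<subseteq> T \<or> T \<subseteq> S"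
      proof (cases "m \<le> n")
        case True then show ?thesis using Kmono[OF True] mn by simp
      next
        case False then show ?thesis using Kmono[of n m] mn by simp
      qed
    qed
  qed
  then show ?thesis using inter by simp
qed

lemma zero_int: assumes z: "norm z < 1" and "0 \<in> SS z"
  shows "phi z True ` SS z \<inter> phi z False ` SS z \<noteq> {}"
proof -
  obtain c where c: "0 = sv z c" using assms(2) by (auto simp: SS_def)
  have a: "0 = phi z (c 0) (sv z (c \<circ> Suc))" using sv_shift[OF z, of c] c by (simp add: phi_def)
  have "sv z (\<lambda>n. \<not> c n) = 0" using sv_neg[OF z, of c] c by simp
  then have b: "0 = phi z (\<not> c 0) (sv z ((\<lambda>n. \<not> c n) \<circ> Suc))"
    using sv_shift[OF z, of "\<lambda>n. \<not> c n"] by (simp add: phi_def)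
  have "sv z (c \<circ> Suc) \<in> SS z" "sv z ((\<lambda>n. \<not> c n) \<circ> Suc) \<in> SS z" by (simp_all add: SS_def)
  then have "0 \<in> phi z (c 0) ` SS z" "0 \<in> phi z (\<not> c 0) ` SS z" using a b by (auto intro: image_eqI)
  then show ?thesis by (cases "c 0") auto
qed

lemma sym_bounded_component:
  fixes K :: "complex set"
  assumes cK: "compact K" and conK: "connected K" and neK: "K \<noteq> {}" and pK: "p \<notin> K"
    and symK: "\<And>x. x \<in> K \<Longrightarrow> 2 * p - x \<in> K"
  shows "bounded (connected_component_set (- K) p)"
proof (rule ccontr)
  assume nb: "\<not> bounded (connected_component_set (- K) p)"
  have "\<not> \<not> (\<exists>c. homotopic_with_canon (\<lambda>x. True) K (sphere 0 1)
                               (\<lambda>x. inverse(norm(x - p)) *\<^sub>R (x - p)) (\<lambda>x. c))"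
    using nb unfolding Borsuk_map_essential_bounded_component[OF cK pK] .
  then obtain c where "homotopic_with_canon (\<lambda>x. True) K (sphere 0 1)
                               (\<lambda>x. inverse(norm(x - p)) *\<^sub>R (x - p)) (\<lambda>x. c)"
    by blast
  then have "homotopic_with_canon (\<lambda>x. True) K (- {0})
                               (\<lambda>x. inverse(norm(x - p)) *\<^sub>R (x - p)) (\<lambda>x. c)"
    by (rule homotopic_with_subset_right) auto
  then have "\<exists>g. continuous_on K g \<and> (\<forall>x \<in> K. inverse(norm(x - p)) *\<^sub>R (x - p) = exp(g x))"
    by (intro inessential_eq_continuous_logarithm[THEN iffD1] exI)
  then obtain g where contg: "continuous_on K g"
    and g: "\<And>x. x \<in> K \<Longrightarrow> inverse(norm(x - p)) *\<^sub>R (x - p) = exp (g x)"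
    by blast
  define h where "h x = g (2 * p - x) - g x" for x
  have ref: "(\<lambda>x. 2 * p - x) ` K \<subseteq> K" using symK by blast
  have cr: "continuous_on K (\<lambda>x. 2 * p - x)" by (intro continuous_intros)
  have conth: "continuous_on K h" unfolding h_def
    by (intro continuous_on_diff continuous_on_compose2[OF contg cr ref] contg)
  have eh: "exp (h x) = -1" if x: "x \<in> K" for x
  proof -
    have x2: "2 * p - x \<in> K" by (rule symK[OF x])
    have e1: "exp (g (2*p - x)) = inverse(norm((2*p - x) - p)) *\<^sub>R ((2*p - x) - p)"
      using g[OF x2] by (rule HOL.sym)
    have e2: "exp (g x) = inverse(norm(x - p)) *\<^sub>R (x - p)"
      using g[OF x] by (rule HOL.sym)
    have "(2*p - x) - p = - (x - p)" by simp
    then have "inverse(norm((2*p - x) - p)) *\<^sub>R ((2*p - x) - p) = - (inverse(norm(x - p)) *\<^sub>R (x - p))"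
      by (simp only: norm_minus_cancel scaleR_minus_right)
    then have "exp (g (2*p - x)) = - exp (g x)" using e1 e2 by simp
    moreover have "exp (g x) \<noteq> 0" by simp
    ultimately show ?thesis unfolding h_def by (simp add: exp_diff)
  qed
  have "h constant_on K"
  proof (rule continuous_discrete_range_constant[OF conK conth])
    fix x assume x: "x \<in> K"
    show "\<exists>e>0. \<forall>y. y \<in> K \<and> h y \<noteq> h x \<longrightarrow> e \<le> norm (h y - h x)"
    proof (intro exI[of _ "2*pi"] conjI allI impI)
      show "2 * pi > 0" by simp
      fix y assume y: "y \<in> K \<and> h y \<noteq> h x"
      have e1: "exp (h y - h x) = 1" using eh[OF x] eh[of y] y by (simp add: exp_diff)
      obtain n :: int where re: "Re (h y - h x) = 0" and im: "Im (h y - h x) = of_int (2 * n) * pi"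
        using exp_eq_1[THEN iffD1, OF e1] by blast
      have "n \<noteq> 0"
      proof
        assume "n = 0"
        then have "h y - h x = 0" using re im by (simp add: complex_eq_iff)
        then show False using y by simp
      qed
      then have "1 \<le> \<bar>real_of_int n\<bar>" by linarith
      then have "2 * pi * 1 \<le> 2 * pi * \<bar>real_of_int n\<bar>" by (intro mult_left_mono) auto
      moreover have "\<bar>Im (h y - h x)\<bar> = 2 * pi * \<bar>real_of_int n\<bar>" using im pi_gt_zero by (simp add: abs_mult)
      ultimately have "2 * pi \<le> \<bar>Im (h y - h x)\<bar>" by simp
      also have "\<dots> \<le> norm (h y - h x)" by (rule abs_Im_le_cmod)
      finally show "2 * pi \<le> norm (h y - h x)" .
    qed
  qed
  then obtain C where C: "\<And>x. x \<in> K \<Longrightarrow> h x = C" by (auto simp: constant_on_def)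
  obtain x0 where x0: "x0 \<in> K" using neK by blast
  have "h x0 = C" "h (2*p - x0) = C" using C x0 symK by auto
  moreover have "h (2*p - x0) = - h x0" by (simp add: h_def)
  ultimately have "h x0 = 0" by simp
  then show False using eh[OF x0] by simp
qed

lemma hole_not_full:
  fixes X K :: "complex set"
  assumes bX: "bounded X" and KX: "K \<subseteq> X" and cK: "compact K" and conK: "connected K"
    and neK: "K \<noteq> {}" and pX: "p \<notin> X" and sym: "\<And>x. x \<in> K \<Longrightarrow> 2 * p - x \<in> K"
  shows "\<not> full X"
proof
  assume "full X"
  then have cX: "connected (- X)" by (simp add: full_def)
  have pK: "p \<notin> K" using pX KX by blast
  have b: "bounded (connected_component_set (- K) p)"
    by (rule sym_bounded_component[OF cK conK neK pK sym])
  have "connected_component_set (- X) p \<subseteq> connected_component_set (- K) p"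
    by (rule connected_component_mono) (use KX in blast)
  moreover have "connected_component_set (- X) p = - X"
    by (rule connected_component_eq_self[OF cX]) (use pX in simp)
  ultimately have "bounded (- X)" using b bounded_subset by metis
  then have "bounded (X \<union> - X)" using bX bounded_Un by blast
  moreover have "X \<union> - X = UNIV" by blast
  ultimately show False using not_bounded_UNIV by metis
qed

lemma full_zero: assumes z: "norm z < 1" and c: "connected (SS z)" and f: "full (SS z)"
  shows "0 \<in> SS z"
proof (rule ccontr)
  assume "0 \<notin> SS z"
  have "\<not> full (SS z)"
  proof (rule hole_not_full[OF bounded_SS[OF z] order_refl compact_SS[OF z] c SS_ne \<open>0 \<notin> SS z\<close>])
    fix x assume "x \<in> SS z" then show "2 * 0 - x \<in> SS z" using SS_neg[OF z] by simp
  qed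
  then show False using f by simp
qed



definition cdiv :: "int \<Rightarrow> int \<Rightarrow> int" where "cdiv x y = - ((- x) div y)"

lemma cdiv_ge: assumes "y > 0" shows "real_of_int x / real_of_int y \<le> real_of_int (cdiv x y)"
proof -
  have "real_of_int ((- x) div y) \<le> real_of_int (- x) / real_of_int y"
    using floor_divide_of_int_eq[of "-x" y, where 'a=real] of_int_floor_le by metis
  then have h: "real_of_int ((- x) div y) \<le> - (real_of_int x / real_of_int y)" by simp
  show ?thesis unfolding cdiv_def using h by simp
qed

lemma div_err: assumes "y > 0"
  shows "\<bar>real_of_int x / real_of_int y - real_of_int (x div y)\<bar> < 1"
proof -
  have f: "real_of_int (x div y) = of_int \<lfloor>real_of_int x / real_of_int y\<rfloor>"
    using floor_divide_of_int_eq[of x y, where 'a=real] by simp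
  show ?thesis unfolding f
    using of_int_floor_le[of "real_of_int x / real_of_int y"] real_of_int_floor_add_one_gt[of "real_of_int x / real_of_int y"]
    by linarith
qed

fun chk :: "int \<Rightarrow> int \<Rightarrow> int \<Rightarrow> int \<Rightarrow> int \<Rightarrow> int \<Rightarrow> int \<Rightarrow> int \<Rightarrow> int \<Rightarrow> nat \<Rightarrow> int \<Rightarrow> int \<Rightarrow> int \<Rightarrow> bool" where
  "chk M p q D mn md en ed RS n a b r =
    (if (RS + r)^2 < a^2 + b^2 then True
     else case n of 0 \<Rightarrow> False
       | Suc k \<Rightarrow> (\<forall>d\<in>{1,-1}.
           let A = a - d*M; N2 = p^2 + q^2 in
           chk M p q D mn md en ed RS k (((A*p + b*q)*D) div N2) (((b*p - A*q)*D) div N2)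
               (cdiv (r*md) mn + cdiv ((\<bar>A\<bar> + \<bar>b\<bar>)*en*md*md) (ed*mn*mn) + 2)))"

declare chk.simps[simp del]

lemma step_bound:
  fixes z z0 x c d :: complex and m e R1 R2 :: real
  assumes m: "0 < m" "m \<le> norm z" "m \<le> norm z0" and ze: "norm (z - z0) \<le> e"
    and xc: "norm (x - c) \<le> R1" and cd: "norm (c - d) \<le> R2" and e: "0 \<le> e"
  shows "norm ((x - d)/z - (c - d)/z0) \<le> R1/m + R2*e/m^2"
proof -
  have z: "z \<noteq> 0" "z0 \<noteq> 0" using m by auto
  have eq: "(x - d)/z - (c - d)/z0 = (x - c)/z + (c - d) * (z0 - z) / (z * z0)"
    using z by (simp add: field_simps)
  have b1: "norm ((x - c)/z) \<le> R1/m"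
  proof -
    have "norm ((x - c)/z) = norm (x - c) / norm z" by (simp add: norm_divide)
    also have "\<dots> \<le> R1 / norm z" using xc by (simp add: divide_right_mono)
    also have "\<dots> \<le> R1 / m"
    proof (rule divide_left_mono)
      show "0 \<le> R1" using xc norm_ge_zero[of "x - c"] by linarith
      show "m \<le> norm z" using m by simp
      show "0 < norm z * m" using m by (intro mult_pos_pos) auto
    qed
    finally show ?thesis .
  qed
  have b2: "norm ((c - d) * (z0 - z) / (z * z0)) \<le> R2*e/m^2"
  proof -
    have "norm ((c - d) * (z0 - z) / (z * z0)) = norm (c - d) * norm (z - z0) / (norm z * norm z0)"
      by (simp add: norm_divide norm_mult norm_minus_commute)
    also have "\<dots> \<le> R2 * e / (norm z * norm z0)"
    proof -
      have "0 \<le> R2" using cd norm_ge_zero[of "c - d"] by linarith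
      then show ?thesis using cd ze by (intro divide_right_mono mult_mono) auto
    qed
    also have "\<dots> \<le> R2 * e / (m * m)"
    proof (rule divide_left_mono)
      have "0 \<le> R2" using cd norm_ge_zero[of "c - d"] by linarith
      then show "0 \<le> R2 * e" using e by simp
      show "m * m \<le> norm z * norm z0" using m by (intro mult_mono) auto
      show "0 < norm z * norm z0 * (m * m)" using m by (intro mult_pos_pos) auto
    qed
    finally show ?thesis by (simp add: power2_eq_square)
  qed
  show ?thesis unfolding eq using norm_triangle_le[OF add_mono[OF b1 b2]] .
qed

lemma SS_step: assumes z: "norm z < 1" "z \<noteq> 0" and x: "x \<in> SS z"
  shows "\<exists>d\<in>{1,-1::int}. (x - of_int d) / z \<in> SS z"
proof -
  obtain c where c: "x = sv z c" using x by (auto simp: SS_def)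
  have "x = sg (c 0) + z * sv z (c \<circ> Suc)" using sv_shift[OF z(1), of c] c by simp
  then have "(x - sg (c 0)) / z = sv z (c \<circ> Suc)" using z(2) by (simp add: field_simps)
  moreover have "sv z (c \<circ> Suc) \<in> SS z" by (simp add: SS_def)
  ultimately show ?thesis by (cases "c 0") (auto simp: sg_def)
qed

lemma sq_div: fixes u v w M :: real assumes M: "M > 0" and h: "(u/M)^2 + (v/M)^2 \<le> (w/M)^2"
  shows "u^2 + v^2 \<le> w^2"
proof -
  have "(u/M)^2 + (v/M)^2 = (u^2 + v^2) / M^2" by (simp add: power_divide add_divide_distrib)
  moreover have "(w/M)^2 = w^2 / M^2" by (simp add: power_divide)
  ultimately have "(u^2 + v^2) / M^2 \<le> w^2 / M^2" using h by simp
  then show ?thesis using M by (simp add: divide_le_cancel)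
qed

lemma norm_c_bound: fixes x c :: complex
  assumes "norm x \<le> R" "norm (x - c) \<le> r" shows "norm c \<le> R + r"
proof -
  have "norm c \<le> norm x + norm (c - x)" by (rule norm_triangle_sub)
  also have "norm (c - x) = norm (x - c)" by (rule norm_minus_commute)
  finally show ?thesis using assms by linarith
qed

lemma prune_contra:
  fixes a b RS r M :: int and x :: complex
  assumes M: "M > 0" and xb: "norm x \<le> real_of_int RS / real_of_int M"
    and xc: "norm (x - Complex (real_of_int a / real_of_int M) (real_of_int b / real_of_int M)) \<le> real_of_int r / real_of_int M"
    and lt: "(RS + r)^2 < a^2 + b^2"
  shows False
proof -
  let ?c = "Complex (real_of_int a / real_of_int M) (real_of_int b / real_of_int M)"
  have "norm ?c \<le> real_of_int RS / real_of_int M + real_of_int r / real_of_int M"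
    by (rule norm_c_bound[OF xb xc])
  then have nc: "norm ?c \<le> real_of_int (RS + r) / real_of_int M" by (simp add: add_divide_distrib)
  have "(real_of_int a / real_of_int M)^2 + (real_of_int b / real_of_int M)^2 \<le> (real_of_int (RS + r) / real_of_int M)^2"
    using nc by (intro sqrt_le_D) (simp add: complex_norm)
  then have "(real_of_int a)^2 + (real_of_int b)^2 \<le> (real_of_int (RS + r))^2"
    by (rule sq_div[rotated]) (use M in simp)
  then have "real_of_int (a^2 + b^2) \<le> real_of_int ((RS + r)^2)" by simp
  then show False using lt by linarith
qed

lemma chk_sound:
  fixes M p q D mn md en ed RS :: int and z :: complex
  defines "z0 \<equiv> Complex (real_of_int p / real_of_int D) (real_of_int q / real_of_int D)"
  assumes pos: "M > 0" "D > 0" "p^2 + q^2 > 0" "mn > 0" "md > 0" "en \<ge> 0" "ed > 0"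
    and z1: "norm z < 1" and zne: "z \<noteq> 0"
    and ze: "norm (z - z0) \<le> real_of_int en / real_of_int ed"
    and mz: "real_of_int mn / real_of_int md \<le> norm z" and mz0: "real_of_int mn / real_of_int md \<le> norm z0"
    and RSb: "\<And>x. x \<in> SS z \<Longrightarrow> norm x \<le> real_of_int RS / real_of_int M"
  shows "chk M p q D mn md en ed RS n a b r \<Longrightarrow>
         norm (x - Complex (real_of_int a / real_of_int M) (real_of_int b / real_of_int M)) \<le> real_of_int r / real_of_int M
         \<Longrightarrow> x \<notin> SS z"
proof (induction n arbitrary: a b r x)
  case (0 a b r x)
  show ?case
  proof
    assume xS: "x \<in> SS z"
    from "0.prems"(1) have lt: "(RS + r)^2 < a^2 + b^2"
      unfolding chk.simps[of M p q D mn md en ed RS 0] by (simp split: if_splits)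
    show False by (rule prune_contra[OF pos(1) RSb[OF xS] "0.prems"(2) lt])
  qed
next
  case (Suc k a b r x)
  show ?case
  proof
    assume xS: "x \<in> SS z"
    let ?c = "Complex (real_of_int a / real_of_int M) (real_of_int b / real_of_int M)"
    define N2 where "N2 = p^2 + q^2"
    have N2: "N2 > 0" using pos by (simp add: N2_def)
    have ch: "(RS + r)^2 < a^2 + b^2 \<or> (\<forall>d\<in>{1,-1}. chk M p q D mn md en ed RS k
              ((((a - d*M)*p + b*q)*D) div N2) (((b*p - (a - d*M)*q)*D) div N2)
              (cdiv (r*md) mn + cdiv ((\<bar>a - d*M\<bar> + \<bar>b\<bar>)*en*md*md) (ed*mn*mn) + 2))"
      using Suc.prems(1) unfolding chk.simps[of M p q D mn md en ed RS "Suc k"]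
      by (simp add: N2_def Let_def split: if_splits)
    show False
    proof (cases "(RS + r)^2 < a^2 + b^2")
      case True
      show False by (rule prune_contra[OF pos(1) RSb[OF xS] Suc.prems(2) True])
    next
      case False
      with ch have all: "\<forall>d\<in>{1,-1}. chk M p q D mn md en ed RS k
              ((((a - d*M)*p + b*q)*D) div N2) (((b*p - (a - d*M)*q)*D) div N2)
              (cdiv (r*md) mn + cdiv ((\<bar>a - d*M\<bar> + \<bar>b\<bar>)*en*md*md) (ed*mn*mn) + 2)" by simp
      obtain d where d: "d \<in> {1,-1::int}" and x'S: "(x - of_int d) / z \<in> SS z"
        using SS_step[OF z1 zne xS] by blast
      define A where "A = a - d*M"
      define a2 where "a2 = ((A*p + b*q)*D) div N2"
      define b2 where "b2 = ((b*p - A*q)*D) div N2"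
      define r2 where "r2 = cdiv (r*md) mn + cdiv ((\<bar>A\<bar> + \<bar>b\<bar>)*en*md*md) (ed*mn*mn) + 2"
      have chk2: "chk M p q D mn md en ed RS k a2 b2 r2"
        using all d unfolding a2_def b2_def r2_def A_def by blast
      let ?c2 = "Complex (real_of_int a2 / real_of_int M) (real_of_int b2 / real_of_int M)"
      let ?e = "(?c - of_int d) / z0"
      define m where "m = real_of_int mn / real_of_int md"
      define eps where "eps = real_of_int en / real_of_int ed"
      have mpos: "m > 0" using pos by (simp add: m_def)
      have epos: "eps \<ge> 0" using pos by (simp add: eps_def)
      have cd: "norm (?c - of_int d) \<le> (\<bar>real_of_int A\<bar> + \<bar>real_of_int b\<bar>) / real_of_int M"
      proof -
        have "?c - of_int d = Complex (real_of_int A / real_of_int M) (real_of_int b / real_of_int M)"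
          using pos(1) by (simp add: A_def complex_eq_iff field_simps)
        then have "norm (?c - of_int d) \<le> \<bar>real_of_int A / real_of_int M\<bar> + \<bar>real_of_int b / real_of_int M\<bar>"
          using cmod_le[of "?c - of_int d"] by simp
        also have "\<dots> = (\<bar>real_of_int A\<bar> + \<bar>real_of_int b\<bar>) / real_of_int M"
          using pos(1) by (simp add: abs_divide add_divide_distrib)
        finally show ?thesis .
      qed
      have sb: "norm ((x - of_int d)/z - ?e) \<le> (real_of_int r / real_of_int M)/m + ((\<bar>real_of_int A\<bar> + \<bar>real_of_int b\<bar>) / real_of_int M)*eps/m^2"
        by (rule step_bound[OF mpos _ _ _ Suc.prems(2) cd epos])
           (use mz mz0 ze in \<open>simp_all add: m_def eps_def\<close>)
      have eRe: "Re ?e = real_of_int ((A*p + b*q)*D) / real_of_int N2 / real_of_int M"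
        and eIm: "Im ?e = real_of_int ((b*p - A*q)*D) / real_of_int N2 / real_of_int M"
      proof -
        have D0: "real_of_int D \<noteq> 0" "real_of_int M \<noteq> 0" using pos by auto
        have N0: "real_of_int N2 \<noteq> 0" using N2 by simp
        have hden: "(Re z0)^2 + (Im z0)^2 = real_of_int N2 / (real_of_int D)^2"
          unfolding z0_def N2_def by (simp add: power_divide add_divide_distrib)
        have cR: "Re (?c - of_int d) = real_of_int A / real_of_int M" "Im (?c - of_int d) = real_of_int b / real_of_int M"
          using D0 by (simp_all add: A_def field_simps)
        have zR: "Re z0 = real_of_int p / real_of_int D" "Im z0 = real_of_int q / real_of_int D"
          unfolding z0_def by simp_all
        show "Re ?e = real_of_int ((A*p + b*q)*D) / real_of_int N2 / real_of_int M"
          unfolding Re_divide hden unfolding cR zR using D0 N0 by (simp add: field_simps power2_eq_square)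
        show "Im ?e = real_of_int ((b*p - A*q)*D) / real_of_int N2 / real_of_int M"
          unfolding Im_divide hden unfolding cR zR using D0 N0 by (simp add: field_simps power2_eq_square)
      qed
      have ec: "norm (?e - ?c2) \<le> 2 / real_of_int M"
      proof -
        have Mp: "real_of_int M > 0" using pos by simp
        have "\<bar>Re (?e - ?c2)\<bar> < 1 / real_of_int M"
        proof -
          define u where "u = real_of_int ((A*p + b*q)*D) / real_of_int N2"
          have k: "\<bar>u - real_of_int a2\<bar> < 1" unfolding a2_def u_def by (rule div_err[OF N2])
          have "Re (?e - ?c2) = (u - real_of_int a2) / real_of_int M"
            using eRe unfolding u_def by (simp add: diff_divide_distrib)
          then show ?thesis using k Mp by (simp add: abs_divide divide_strict_right_mono)
        qed
        moreover have "\<bar>Im (?e - ?c2)\<bar> < 1 / real_of_int M"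
        proof -
          define u where "u = real_of_int ((b*p - A*q)*D) / real_of_int N2"
          have k: "\<bar>u - real_of_int b2\<bar> < 1" unfolding b2_def u_def by (rule div_err[OF N2])
          have "Im (?e - ?c2) = (u - real_of_int b2) / real_of_int M"
            using eIm unfolding u_def by (simp add: diff_divide_distrib)
          then show ?thesis using k Mp by (simp add: abs_divide divide_strict_right_mono)
        qed
        ultimately show ?thesis using cmod_le[of "?e - ?c2"] by simp
      qed
      have r2b: "(real_of_int r / real_of_int M)/m + ((\<bar>real_of_int A\<bar> + \<bar>real_of_int b\<bar>) / real_of_int M)*eps/m^2 + 2 / real_of_int M
                 \<le> real_of_int r2 / real_of_int M"
      proof -
        have "(real_of_int r / real_of_int M)/m + ((\<bar>real_of_int A\<bar> + \<bar>real_of_int b\<bar>) / real_of_int M)*eps/m^2 + 2 / real_of_int M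
            = (real_of_int (r*md) / real_of_int mn + real_of_int ((\<bar>A\<bar> + \<bar>b\<bar>)*en*md*md) / real_of_int (ed*mn*mn) + 2) / real_of_int M"
          using pos by (simp add: m_def eps_def field_simps power2_eq_square)
        also have "\<dots> \<le> real_of_int r2 / real_of_int M"
          unfolding r2_def using cdiv_ge[of mn "r*md"] cdiv_ge[of "ed*mn*mn" "(\<bar>A\<bar> + \<bar>b\<bar>)*en*md*md"] pos
          by (intro divide_right_mono) (simp_all add: mult_pos_pos)
        finally show ?thesis .
      qed
      have "norm ((x - of_int d)/z - ?c2) \<le> norm ((x - of_int d)/z - ?e) + norm (?e - ?c2)"
        using norm_triangle_ineq[of "(x - of_int d)/z - ?e" "?e - ?c2"] by simp
      also have "\<dots> \<le> real_of_int r2 / real_of_int M" using sb ec r2b by linarith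
      finally have "(x - of_int d) / z \<notin> SS z" by (rule Suc.IH[OF chk2])
      then show False using x'S by simp
    qed
  qed
qed



lemma root_near:
  fixes P :: "complex \<Rightarrow> complex" and z0 L :: complex and e :: real
  assumes e: "e > 0" and L: "L \<noteq> 0" and cP: "continuous_on UNIV P"
    and bd: "\<And>h. norm h \<le> e \<Longrightarrow> norm (P (z0 + h) - L * h) \<le> norm L * e"
  shows "\<exists>z. norm (z - z0) \<le> e \<and> P z = 0"
proof -
  define F where "F w = w - P w / L" for w
  have cF: "continuous_on (cball z0 e) F" unfolding F_def
    by (intro continuous_intros continuous_on_subset[OF cP]) (auto simp: L)
  have maps: "F \<in> cball z0 e \<rightarrow> cball z0 e"
  proof
    fix w assume w: "w \<in> cball z0 e"
    define h where "h = w - z0"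
    have nh: "norm h \<le> e" using w by (simp add: h_def dist_norm norm_minus_commute)
    have "F w - z0 = - ((P (z0 + h) - L * h) / L)" using L by (simp add: F_def h_def field_simps)
    then have "norm (F w - z0) = norm (P (z0 + h) - L * h) / norm L" by (simp add: norm_divide)
    also have "\<dots> \<le> e" using bd[OF nh] L by (simp add: pos_divide_le_eq mult.commute)
    finally show "F w \<in> cball z0 e" by (simp add: dist_norm norm_minus_commute)
  qed
  obtain x where x: "x \<in> cball z0 e" "F x = x" using brouwer_ball[OF e cF maps] by blast
  then have "P x = 0" using L by (simp add: F_def)
  moreover have "norm (x - z0) \<le> e" using x by (simp add: dist_norm norm_minus_commute)
  ultimately show ?thesis by blast
qed

lemma poly6_bound:
  fixes a0 a2 a3 a4 a5 a6 h :: complex and e :: real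
  assumes h: "norm h \<le> e"
  shows "norm (a0 + a2*h^2 + a3*h^3 + a4*h^4 + a5*h^5 + a6*h^6)
    \<le> norm a0 + norm a2 * e^2 + norm a3 * e^3 + norm a4 * e^4 + norm a5 * e^5 + norm a6 * e^6"
proof -
  have p: "norm (a * h^k) \<le> norm a * e^k" for a :: complex and k
    by (simp add: norm_mult norm_power mult_left_mono power_mono h)
  have t1: "norm (a0 + a2*h^2 + a3*h^3 + a4*h^4 + a5*h^5 + a6*h^6) \<le> norm (a0 + a2*h^2 + a3*h^3 + a4*h^4 + a5*h^5) + norm (a6*h^6)"
    by (rule norm_triangle_ineq)
  have t2: "norm (a0 + a2*h^2 + a3*h^3 + a4*h^4 + a5*h^5) \<le> norm (a0 + a2*h^2 + a3*h^3 + a4*h^4) + norm (a5*h^5)"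
    by (rule norm_triangle_ineq)
  have t3: "norm (a0 + a2*h^2 + a3*h^3 + a4*h^4) \<le> norm (a0 + a2*h^2 + a3*h^3) + norm (a4*h^4)"
    by (rule norm_triangle_ineq)
  have t4: "norm (a0 + a2*h^2 + a3*h^3) \<le> norm (a0 + a2*h^2) + norm (a3*h^3)"
    by (rule norm_triangle_ineq)
  have t5: "norm (a0 + a2*h^2) \<le> norm a0 + norm (a2*h^2)"
    by (rule norm_triangle_ineq)
  show ?thesis using t1 t2 t3 t4 t5 p[of a2 2] p[of a3 3] p[of a4 4] p[of a5 5] p[of a6 6] by linarith
qed

lemma cmod_num_le: "norm (Complex x y) \<le> \<bar>x\<bar> + \<bar>y\<bar>"
  using cmod_le[of "Complex x y"] by simp

lemma cmod_ge_Im: "\<bar>y\<bar> \<le> norm (Complex x y)"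
  using abs_Im_le_cmod[of "Complex x y"] by simp

lemma norm_Complex_sq: "(norm (Complex x y))^2 = x^2 + y^2"
  by (simp add: cmod_power2)



lemma taylor_Q1: fixes h :: complex shows
  "1 - (Complex (549/1000) (386/1000) + h) + (Complex (549/1000) (386/1000) + h)^3
   + (Complex (549/1000) (386/1000) + h)^4 + (Complex (549/1000) (386/1000) + h)^5
   + (Complex (549/1000) (386/1000) + h)^6
   - Complex (-1229448369684613/500000000000000) (786692899737319/250000000000000) * h
   = Complex (69763717050113/200000000000000000) (-337526984242613/250000000000000000)
   + Complex (-116777194677/200000000000) (42769361051/5000000000) * h^2
   + Complex (156075237/50000000) (290311951/25000000) * h^3
   + Complex (241243/40000) (414371/50000) * h^4
   + Complex (2147/500) (579/250) * h^5 + 1 * h^6"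
proof -
  have i: "\<i> * \<i> = -1" by simp
  show ?thesis unfolding Complex_eq apply simp apply (insert i) by algebra
qed

lemma root_W1: "\<exists>z. norm (z - Complex (549/1000) (386/1000)) \<le> 2/1000 \<and>
   1 - z + z^3 + z^4 + z^5 + z^6 = 0"
proof -
  let ?L = "Complex (-1229448369684613/500000000000000) (786692899737319/250000000000000)"
  have "\<exists>z. norm (z - Complex (549/1000) (386/1000)) \<le> 2/1000 \<and> (\<lambda>z. 1 - z + z^3 + z^4 + z^5 + z^6) z = 0"
  proof (rule root_near[where L = ?L])
    show "(2/1000::real) > 0" by simp
    show "?L \<noteq> 0" by (simp add: complex_eq_iff)
    show "continuous_on UNIV (\<lambda>z::complex. 1 - z + z^3 + z^4 + z^5 + z^6)" by (intro continuous_intros)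
    fix h :: complex assume h: "norm h \<le> 2/1000"
    have "norm ((\<lambda>z. 1 - z + z^3 + z^4 + z^5 + z^6) (Complex (549/1000) (386/1000) + h) - ?L * h)
      = norm (Complex (69763717050113/200000000000000000) (-337526984242613/250000000000000000)
   + Complex (-116777194677/200000000000) (42769361051/5000000000) * h^2
   + Complex (156075237/50000000) (290311951/25000000) * h^3
   + Complex (241243/40000) (414371/50000) * h^4
   + Complex (2147/500) (579/250) * h^5 + 1 * h^6)"
      using taylor_Q1[of h] by simp
    also have "\<dots> \<le> norm (Complex (69763717050113/200000000000000000) (-337526984242613/250000000000000000))
      + norm (Complex (-116777194677/200000000000) (42769361051/5000000000)) * (2/1000)^2
      + norm (Complex (156075237/50000000) (290311951/25000000)) * (2/1000)^3
      + norm (Complex (241243/40000) (414371/50000)) * (2/1000)^4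
      + norm (Complex (2147/500) (579/250)) * (2/1000)^5 + norm (1::complex) * (2/1000)^6"
      by (rule poly6_bound[OF h])
    also have "\<dots> \<le> (\<bar>69763717050113/200000000000000000\<bar> + \<bar>-337526984242613/250000000000000000\<bar>)
      + (\<bar>-116777194677/200000000000\<bar> + \<bar>42769361051/5000000000\<bar>) * (2/1000)^2
      + (\<bar>156075237/50000000\<bar> + \<bar>290311951/25000000\<bar>) * (2/1000)^3
      + (\<bar>241243/40000\<bar> + \<bar>414371/50000\<bar>) * (2/1000)^4
      + (\<bar>2147/500\<bar> + \<bar>579/250\<bar>) * (2/1000)^5 + 1 * (2/1000)^6"
      by (intro add_mono mult_right_mono cmod_num_le) simp_all
    also have "\<dots> \<le> \<bar>786692899737319/250000000000000\<bar> * (2/1000)" by (simp add: power_divide)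
    also have "\<dots> \<le> norm ?L * (2/1000)" by (intro mult_right_mono cmod_ge_Im) simp
    finally show "norm ((\<lambda>z. 1 - z + z^3 + z^4 + z^5 + z^6) (Complex (549/1000) (386/1000) + h) - ?L * h)
       \<le> norm ?L * (2/1000)" .
  qed
  then show ?thesis by simp
qed

lemma chk_W1: "chk 1048576 549 386 1000 669 1000 2 1000 3250586 60 0 0 0"
  by code_simp

lemma norm_z0_W1: "671/1000 \<le> norm (Complex (549/1000) (386/1000))"
   "norm (Complex (549/1000) (386/1000)) \<le> 6712/10000"
proof -
  have sq: "(norm (Complex (549/1000) (386/1000)))^2 = 450397/1000000"
    unfolding norm_Complex_sq by (simp add: power2_eq_square)
  have "(671/1000)^2 \<le> (norm (Complex (549/1000) (386/1000)))^2" unfolding sq by (simp add: power_divide)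
  from power2_le_imp_le[OF this] show "671/1000 \<le> norm (Complex (549/1000) (386/1000))" by simp
  have "(norm (Complex (549/1000) (386/1000)))^2 \<le> (6712/10000)^2" unfolding sq by (simp add: power_divide)
  from power2_le_imp_le[OF this] show "norm (Complex (549/1000) (386/1000)) \<le> 6712/10000" by simp
qed

lemma W1: "\<exists>z. z \<in> Mset \<and> z \<notin> M0set"
proof -
  obtain z where ze: "norm (z - Complex (549/1000) (386/1000)) \<le> 2/1000"
    and Qz: "1 - z + z^3 + z^4 + z^5 + z^6 = 0" using root_W1 by blast
  let ?z0 = "Complex (549/1000) (386/1000)"
  have nzl: "669/1000 \<le> norm z" using norm_z0_W1(1) ze norm_triangle_ineq2[of ?z0 z]
    by (simp add: norm_minus_commute)
  have nzu: "norm z \<le> 6732/10000" using norm_z0_W1(2) ze norm_triangle_ineq[of ?z0 "z - ?z0"]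
    by simp
  have z1: "norm z < 1" using nzu by simp
  have z0: "z \<noteq> 0" using nzl by auto
  have zD: "z \<in> punctured_disc" using z1 z0 by (simp add: punctured_disc_def)
  have RSb: "norm x \<le> real_of_int 3250586 / real_of_int 1048576" if "x \<in> SS z" for x
  proof -
    have "norm x \<le> 1 / (1 - norm z)" by (rule SS_bound[OF z1 that])
    also have "\<dots> \<le> 1 / (1 - 6732/10000)" using nzu z1 by (intro divide_left_mono) auto
    also have "\<dots> \<le> real_of_int 3250586 / real_of_int 1048576" by simp
    finally show ?thesis .
  qed
  have notin: "0 \<notin> SS z"
  proof (rule chk_sound[OF _ _ _ _ _ _ _ z1 z0 _ _ _ RSb chk_W1])
    show "norm (z - Complex (real_of_int 549 / real_of_int 1000) (real_of_int 386 / real_of_int 1000))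
      \<le> real_of_int 2 / real_of_int 1000" using ze by simp
    show "real_of_int 669 / real_of_int 1000 \<le> norm z" using nzl by simp
    show "real_of_int 669 / real_of_int 1000 \<le> norm (Complex (real_of_int 549 / real_of_int 1000) (real_of_int 386 / real_of_int 1000))"
      using norm_z0_W1(1) by simp
    show "norm (0 - Complex (real_of_int 0 / real_of_int 1048576) (real_of_int 0 / real_of_int 1048576))
      \<le> real_of_int 0 / real_of_int 1048576" by (simp add: complex_eq_iff)
  qed simp_all
  have conn: "connected (SS z)"
  proof (rule conn_SS[OF z1])
    define c1 where "c1 = (\<lambda>n::nat. n \<noteq> 0)"
    define c2 where "c2 = (\<lambda>n::nat. n \<notin> {2,3,4,5})"
    have t1: "(\<lambda>k. c1 (k + 6)) = (\<lambda>_. True)" and t2: "(\<lambda>k. c2 (k + 6)) = (\<lambda>_. True)"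
      by (auto simp: c1_def c2_def)
    have s1: "sv z c1 = -1 + z + z^2 + z^3 + z^4 + z^5 + z^6 * sv z (\<lambda>_. True)"
      using sv_prefix[OF z1, of c1 6] unfolding t1 by (simp add: c1_def sg_def eval_nat_numeral)
    have s2: "sv z c2 = 1 + z - z^2 - z^3 - z^4 - z^5 + z^6 * sv z (\<lambda>_. True)"
      using sv_prefix[OF z1, of c2 6] unfolding t2 by (simp add: c2_def sg_def eval_nat_numeral)
    have "phi z True (sv z c1) = phi z False (sv z c2)"
      unfolding phi_def sg_def s1 s2 using Qz by simp algebra
    moreover have "sv z c1 \<in> SS z" "sv z c2 \<in> SS z" by (simp_all add: SS_def)
    ultimately show "phi z True ` SS z \<inter> phi z False ` SS z \<noteq> {}" by blast
  qed
  have "z \<in> Mset" using zD conn by (simp add: Mset_iff)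
  moreover have "z \<notin> M0set" using notin by (simp add: M0set_iff)
  ultimately show ?thesis by blast
qed



abbreviation "Pp (z::complex) \<equiv> 1 - z + z^2 + z^3 + z^4 - z^5 + z^6"

lemma taylor_P: fixes h :: complex shows
  "Pp (Complex (425/1000) (566/1000) + h)
   - Complex (-3680488814309/4000000000000) (671624212986989/250000000000000) * h
   = Complex (-81638284249891/1000000000000000000) (-487353396947/10000000000000000)
   + Complex (314901977083/200000000000) (1314064937/1000000000) * h^2
   + Complex (-5072911/2000000) (-985123/25000000) * h^3
   + Complex (-644193/200000) (8773/2000) * h^4
   + Complex (31/20) (849/250) * h^5 + 1 * h^6"
proof -
  have i: "\<i> * \<i> = -1" by simp
  show ?thesis unfolding Complex_eq apply simp apply (insert i) by algebra
qed

lemma root_W2: "\<exists>z. norm (z - Complex (425/1000) (566/1000)) \<le> 2/10000 \<and> Pp z = 0"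
proof -
  let ?L = "Complex (-3680488814309/4000000000000) (671624212986989/250000000000000)"
  have "\<exists>z. norm (z - Complex (425/1000) (566/1000)) \<le> 2/10000 \<and> (\<lambda>z. Pp z) z = 0"
  proof (rule root_near[where L = ?L])
    show "(2/10000::real) > 0" by simp
    show "?L \<noteq> 0" by (simp add: complex_eq_iff)
    show "continuous_on UNIV (\<lambda>z::complex. Pp z)" by (intro continuous_intros)
    fix h :: complex assume h: "norm h \<le> 2/10000"
    have "norm ((\<lambda>z. Pp z) (Complex (425/1000) (566/1000) + h) - ?L * h)
      = norm (Complex (-81638284249891/1000000000000000000) (-487353396947/10000000000000000)
   + Complex (314901977083/200000000000) (1314064937/1000000000) * h^2
   + Complex (-5072911/2000000) (-985123/25000000) * h^3
   + Complex (-644193/200000) (8773/2000) * h^4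
   + Complex (31/20) (849/250) * h^5 + 1 * h^6)"
      using taylor_P[of h] by simp
    also have "\<dots> \<le> norm (Complex (-81638284249891/1000000000000000000) (-487353396947/10000000000000000))
      + norm (Complex (314901977083/200000000000) (1314064937/1000000000)) * (2/10000)^2
      + norm (Complex (-5072911/2000000) (-985123/25000000)) * (2/10000)^3
      + norm (Complex (-644193/200000) (8773/2000)) * (2/10000)^4
      + norm (Complex (31/20) (849/250)) * (2/10000)^5 + norm (1::complex) * (2/10000)^6"
      by (rule poly6_bound[OF h])
    also have "\<dots> \<le> (\<bar>-81638284249891/1000000000000000000\<bar> + \<bar>-487353396947/10000000000000000\<bar>)
      + (\<bar>314901977083/200000000000\<bar> + \<bar>1314064937/1000000000\<bar>) * (2/10000)^2
      + (\<bar>-5072911/2000000\<bar> + \<bar>-985123/25000000\<bar>) * (2/10000)^3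
      + (\<bar>-644193/200000\<bar> + \<bar>8773/2000\<bar>) * (2/10000)^4
      + (\<bar>31/20\<bar> + \<bar>849/250\<bar>) * (2/10000)^5 + 1 * (2/10000)^6"
      by (intro add_mono mult_right_mono cmod_num_le) simp_all
    also have "\<dots> \<le> \<bar>671624212986989/250000000000000\<bar> * (2/10000)" by (simp add: power_divide)
    also have "\<dots> \<le> norm ?L * (2/10000)" by (intro mult_right_mono cmod_ge_Im) simp
    finally show "norm ((\<lambda>z. Pp z) (Complex (425/1000) (566/1000) + h) - ?L * h)
       \<le> norm ?L * (2/10000)" .
  qed
  then show ?thesis by simp
qed

lemma chk_W2: "chk 1048576 425 566 1000 283 400 2 10000 3596616 60 (-207575) 44717 1890"
  by code_simp

lemma norm_z0_W2: "7077/10000 \<le> norm (Complex (425/1000) (566/1000))"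
   "norm (Complex (425/1000) (566/1000)) \<le> 7079/10000"
proof -
  have sq: "(norm (Complex (425/1000) (566/1000)))^2 = 500981/1000000"
    unfolding norm_Complex_sq by (simp add: power2_eq_square)
  have "(7077/10000)^2 \<le> (norm (Complex (425/1000) (566/1000)))^2" unfolding sq by (simp add: power_divide)
  from power2_le_imp_le[OF this] show "7077/10000 \<le> norm (Complex (425/1000) (566/1000))" by simp
  have "(norm (Complex (425/1000) (566/1000)))^2 \<le> (7079/10000)^2" unfolding sq by (simp add: power_divide)
  from power2_le_imp_le[OF this] show "norm (Complex (425/1000) (566/1000)) \<le> 7079/10000" by simp
qed

lemma pz0_W2: "Complex (425/1000) (566/1000) ^ 4 - Complex (425/1000) (566/1000) ^ 5
  = Complex (-1583675138749/8000000000000) (21322749654337/500000000000000)"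
  by (simp add: eval_nat_numeral complex_mult complex_eq_iff)

lemma cat_in_SS: assumes z: "norm z < 1" and s: "s \<in> SS z"
  shows "(\<Sum>j<n. sg (w j) * z^j) + z^n * s \<in> SS z"
proof -
  obtain c where c: "s = sv z c" using s by (auto simp: SS_def)
  define cc where "cc k = (if k < n then w k else c (k - n))" for k
  have "sv z cc = (\<Sum>j<n. sg (cc j) * z^j) + z^n * sv z (\<lambda>k. cc (k + n))" by (rule sv_prefix[OF z])
  also have "(\<Sum>j<n. sg (cc j) * z^j) = (\<Sum>j<n. sg (w j) * z^j)" by (rule sum.cong) (auto simp: cc_def)
  also have "(\<lambda>k. cc (k + n)) = c" by (auto simp: cc_def fun_eq_iff)
  finally have "(\<Sum>j<n. sg (w j) * z^j) + z^n * s = sv z cc" using c by simp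
  then show ?thesis unfolding SS_def by (simp only: rangeI)
qed




lemma lt7: "{..<7::nat} = {0,1,2,3,4,5,6}" by auto
lemma lt6: "{..<6::nat} = {0,1,2,3,4,5}" by auto
lemma lt5: "{..<5::nat} = {0,1,2,3,4}" by auto

lemma W2: "\<exists>z. z \<in> M0set \<and> z \<notin> M1set"
proof -
  obtain z where ze: "norm (z - Complex (425/1000) (566/1000)) \<le> 2/10000"
    and Pz: "Pp z = 0" using root_W2 by blast
  let ?z0 = "Complex (425/1000) (566/1000)"
  have nzl: "283/400 \<le> norm z" using norm_z0_W2(1) ze norm_triangle_ineq2[of ?z0 z]
    by (simp add: norm_minus_commute)
  have nzu: "norm z \<le> 7081/10000" using norm_z0_W2(2) ze norm_triangle_ineq[of ?z0 "z - ?z0"]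
    by simp
  have z1: "norm z < 1" using nzu by simp
  have z0: "z \<noteq> 0" using nzl by auto
  have zD: "z \<in> punctured_disc" using z1 z0 by (simp add: punctured_disc_def)
  have zeroS: "0 \<in> SS z"
  proof -
    define c where "c = (\<lambda>n::nat. n mod 7 \<notin> {1,5})"
    have tail: "(\<lambda>k. c (k + 7)) = c" by (simp add: c_def fun_eq_iff)
    have "sv z c = (\<Sum>j<7. sg (c j) * z^j) + z^7 * sv z c"
      using sv_prefix[OF z1, of c 7] unfolding tail .
    also have "(\<Sum>j<7. sg (c j) * z^j) = Pp z"
      unfolding lt7 by (simp add: c_def sg_def)
    finally have e: "sv z c = Pp z + z^7 * sv z c" .
    have "(1 - z^7) * sv z c = 0" using e Pz by algebra
    moreover have "z^7 \<noteq> 1"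
    proof
      assume "z^7 = 1"
      then have "norm (z^7) = 1" by simp
      then have "norm z ^ 7 = 1" by (simp add: norm_power)
      moreover have "norm z ^ 7 < 1" using z1 by (simp add: power_less_one_iff)
      ultimately show False by simp
    qed
    ultimately have "sv z c = 0" by simp
    then show ?thesis unfolding SS_def by (metis rangeI)
  qed
  have conn: "connected (SS z)" by (rule conn_SS[OF z1 zero_int[OF z1 zeroS]])
  define w where "w = (\<lambda>j::nat. j \<in> {1,4})"
  define v where "v = (\<lambda>j::nat. j \<in> {0,2,3,4})"
  define Pw where "Pw = (\<Sum>j<6. sg (w j) * z^j)"
  define Pv where "Pv = (\<Sum>j<6. sg (v j) * z^j)"
  have Pw: "Pw = -1 + z - z^2 - z^3 + z^4 - z^5" unfolding Pw_def lt6 by (simp add: w_def sg_def)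
  have Pv: "Pv = 1 - z + z^2 + z^3 + z^4 - z^5" unfolding Pv_def lt6 by (simp add: v_def sg_def)
  define p where "p = z^4 - z^5"
  have psum: "Pw + Pv = 2 * p" by (simp add: Pw Pv p_def)
  define A where "A = (\<lambda>s. Pw + z^6 * s) ` SS z"
  define B where "B = (\<lambda>s. Pv + z^6 * s) ` SS z"
  have AS: "A \<subseteq> SS z" unfolding A_def Pw_def using cat_in_SS[OF z1] by blast
  have BS: "B \<subseteq> SS z" unfolding B_def Pv_def using cat_in_SS[OF z1] by blast
  have cont6: "continuous_on (SS z) (\<lambda>s. P + z^6 * s)" for P by (intro continuous_intros)
  have cA: "compact A" "connected A" unfolding A_def
    using compact_continuous_image[OF cont6 compact_SS[OF z1]] connected_continuous_image[OF cont6 conn] by auto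
  have cB: "compact B" "connected B" unfolding B_def
    using compact_continuous_image[OF cont6 compact_SS[OF z1]] connected_continuous_image[OF cont6 conn] by auto
  have AB: "A \<inter> B \<noteq> {}"
  proof -
    define e1 where "e1 = (\<lambda>k::nat. k \<noteq> 3)"
    define e2 where "e2 = (\<lambda>k::nat. k \<notin> {1,2,4})"
    have t1: "(\<lambda>k. e1 (k + 5)) = (\<lambda>_. True)" and t2: "(\<lambda>k. e2 (k + 5)) = (\<lambda>_. True)"
      by (auto simp: e1_def e2_def)
    have s1: "sv z e1 = 1 + z + z^2 - z^3 + z^4 + z^5 * sv z (\<lambda>_. True)"
      using sv_prefix[OF z1, of e1 5] unfolding t1 lt5 by (simp add: e1_def sg_def)
    have s2: "sv z e2 = 1 - z - z^2 + z^3 - z^4 + z^5 * sv z (\<lambda>_. True)"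
      using sv_prefix[OF z1, of e2 5] unfolding t2 lt5 by (simp add: e2_def sg_def)
    have "Pw + z^6 * sv z e1 = Pv + z^6 * sv z e2"
      unfolding Pw Pv s1 s2 using Pz by algebra
    moreover have "sv z e1 \<in> SS z" "sv z e2 \<in> SS z" by (simp_all add: SS_def)
    ultimately have "Pw + z^6 * sv z e1 \<in> A" "Pw + z^6 * sv z e1 \<in> B" unfolding A_def B_def
      by (auto intro!: image_eqI)
    then show ?thesis by blast
  qed
  define K where "K = A \<union> B"
  have symK: "2 * p - x \<in> K" if x: "x \<in> K" for x
  proof -
    from x consider (a) s where "s \<in> SS z" "x = Pw + z^6 * s" | (b) s where "s \<in> SS z" "x = Pv + z^6 * s"
      unfolding K_def A_def B_def by blast
    then show ?thesis
    proof cases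
      case a
      have "2 * p - x = Pv + z^6 * (- s)" using a(2) psum by algebra
      moreover have "- s \<in> SS z" using SS_neg[OF z1 a(1)] .
      ultimately show ?thesis unfolding K_def B_def by blast
    next
      case b
      have "2 * p - x = Pw + z^6 * (- s)" using b(2) psum by algebra
      moreover have "- s \<in> SS z" using SS_neg[OF z1 b(1)] .
      ultimately show ?thesis unfolding K_def A_def by blast
    qed
  qed
  have RSb: "norm x \<le> real_of_int 3596616 / real_of_int 1048576" if "x \<in> SS z" for x
  proof -
    have "norm x \<le> 1 / (1 - norm z)" by (rule SS_bound[OF z1 that])
    also have "\<dots> \<le> 1 / (1 - 7081/10000)" using nzu z1 by (intro divide_left_mono) auto
    also have "\<dots> \<le> real_of_int 3596616 / real_of_int 1048576" by simp
    finally show ?thesis .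
  qed
  have ball0: "norm (p - Complex (real_of_int (-207575) / real_of_int 1048576) (real_of_int 44717 / real_of_int 1048576))
      \<le> real_of_int 1890 / real_of_int 1048576"
  proof -
    let ?c = "Complex (-207575 / 1048576) (44717 / 1048576)"
    have n0: "norm ?z0 \<le> 1" using norm_z0_W2(2) by simp
    have nz: "norm z \<le> 1" using z1 by simp
    have d4: "norm (z^4 - ?z0^4) \<le> 4 * (2/10000)"
      using norm_power_diff[OF nz n0, of 4] ze by simp
    have d5: "norm (z^5 - ?z0^5) \<le> 5 * (2/10000)"
      using norm_power_diff[OF nz n0, of 5] ze by simp
    have "p - ?c = (z^4 - ?z0^4) - (z^5 - ?z0^5) + ((?z0^4 - ?z0^5) - ?c)"
      by (simp add: p_def algebra_simps)
    also have "(?z0^4 - ?z0^5) - ?c = Complex (-1583675138749/8000000000000 + 207575 / 1048576) (21322749654337/500000000000000 - 44717 / 1048576)"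
      unfolding pz0_W2 by (simp add: complex_eq_iff)
    finally have eq: "p - ?c = (z^4 - ?z0^4) - (z^5 - ?z0^5) + Complex (-1583675138749/8000000000000 + 207575 / 1048576) (21322749654337/500000000000000 - 44717 / 1048576)" .
    have "norm (p - ?c) \<le> norm (z^4 - ?z0^4) + norm (z^5 - ?z0^5) + norm (Complex (-1583675138749/8000000000000 + 207575 / 1048576) (21322749654337/500000000000000 - 44717 / 1048576))"
      unfolding eq by (rule order_trans[OF norm_triangle_ineq add_right_mono[OF norm_triangle_ineq4]])
    also have "\<dots> \<le> 4 * (2/10000) + 5 * (2/10000) + (\<bar>-1583675138749/8000000000000 + 207575 / 1048576\<bar> + \<bar>21322749654337/500000000000000 - 44717 / 1048576\<bar>)"
      by (intro add_mono d4 d5 cmod_num_le)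
    also have "\<dots> \<le> 1890 / 1048576" by simp
    finally show ?thesis by simp
  qed
  have pnot: "p \<notin> SS z"
  proof (rule chk_sound[OF _ _ _ _ _ _ _ z1 z0 _ _ _ RSb chk_W2 ball0])
    show "norm (z - Complex (real_of_int 425 / real_of_int 1000) (real_of_int 566 / real_of_int 1000))
      \<le> real_of_int 2 / real_of_int 10000" using ze by simp
    show "real_of_int 283 / real_of_int 400 \<le> norm z" using nzl by simp
    show "real_of_int 283 / real_of_int 400 \<le> norm (Complex (real_of_int 425 / real_of_int 1000) (real_of_int 566 / real_of_int 1000))"
      using norm_z0_W2(1) by simp
  qed simp_all
  have nf: "\<not> full (SS z)"
  proof (rule hole_not_full[OF bounded_SS[OF z1] _ _ _ _ pnot symK])
    show "K \<subseteq> SS z" using AS BS by (simp add: K_def)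
    show "compact K" using cA cB by (simp add: K_def compact_Un)
    show "connected K" using cA cB AB by (simp add: K_def connected_Un)
    show "K \<noteq> {}" using AB by (auto simp: K_def)
  qed
  have "z \<in> M0set" using zD zeroS by (simp add: M0set_iff)
  moreover have "z \<notin> M1set" using nf by (simp add: M1set_iff)
  ultimately show ?thesis by blast
qed



theorem proposition2p4p1:
  shows "M1set \<subset> M0set \<and> M0set \<subset> Mset"
proof -
  have s1: "M1set \<subseteq> M0set"
  proof
    fix z assume "z \<in> M1set"
    then have zD: "z \<in> punctured_disc" and c: "connected (SS z)" and f: "full (SS z)"
      by (auto simp: M1set_iff)
    have "0 \<in> SS z" by (rule full_zero[OF pd_norm[OF zD] c f])
    then show "z \<in> M0set" using zD by (simp add: M0set_iff)
  qed
  have s2: "M0set \<subseteq> Mset"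
  proof
    fix z assume "z \<in> M0set"
    then have zD: "z \<in> punctured_disc" and h: "0 \<in> SS z" by (auto simp: M0set_iff)
    have "connected (SS z)" by (rule conn_SS[OF pd_norm[OF zD] zero_int[OF pd_norm[OF zD] h]])
    then show "z \<in> Mset" using zD by (simp add: Mset_iff)
  qed
  obtain z2 where "z2 \<in> M0set" "z2 \<notin> M1set" using W2 by blast
  then have n1: "M1set \<noteq> M0set" by blast
  obtain z1 where "z1 \<in> Mset" "z1 \<notin> M0set" using W1 by blast
  then have n2: "M0set \<noteq> Mset" by blast
  show ?thesis using s1 s2 n1 n2 by blast
qed


end
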